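(* Let $\mathcal A$ be a category of cubes. For any $q\geq0$, the canonical map $\mathcal{A}[q]\to\mathrm{cosk}^\mathcal{A}_1(\mathcal{A}[q]_{\leq1})$ induced by the isomorphism $\mathcal{A}[q]_{\leq 1}\cong\mathcal{A}[q]_{\leq1}$ is an inclusion of presheaves. For $q=0$ or $q=1$ this inclusion is an equality, for any category of cubes $\mathcal{A}$.
   Context: $[0]=\{()\}$, $[n]=\{0,1\}^n$ ($n\ge1$) with the product order; ${\rm PoSet}$: posets with strictly increasing maps. Face maps $\delta_i^\alpha:[n-1]\to[n]$ insert $\alpha$ at position $i$; $\square$ is the subcategory of ${\rm PoSet}$ with objects $[n]$ generated by face maps. A map is adjacency-preserving if strictly increasing and it sends pairs at Hamming distance $1$ to pairs at Hamming distance $1$. A category of cubes is a subcategory $\mathcal A\subset{\rm PoSet}$ with objects $\{[n]:n\ge0\}$, containing $\square$, with all morphisms adjacency-preserving. $\mathcal A$-sets are presheaves on $\mathcal A$; $\mathcal A[q]=\mathcal A(-,[q])$; $K_{\le1}$ denotes restriction of $K$ to the full subcategory on $[0],[1]$; $\mathrm{cosk}_1^{\mathcal A}$ is the right adjoint of this truncation functor, and the canonical map $K\to\mathrm{cosk}_1^{\mathcal A}(K_{\le1})$ is the unit of the adjunction. *)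

theory Defs
  imports "HOL-Library.FuncSet"
begin

text \<open>The cube [n] = {0,1}^n, represented as boolean lists of length n
  (False = 0, True = 1); [0] = {[]}.\<close>
definition cube :: "nat \<Rightarrow> bool list set" where
  "cube n = {xs. length xs = n}"

definition cube_le :: "bool list \<Rightarrow> bool list \<Rightarrow> bool" where
  "cube_le xs ys \<longleftrightarrow> list_all2 (\<le>) xs ys"

definition cube_less :: "bool list \<Rightarrow> bool list \<Rightarrow> bool" where
  "cube_less xs ys \<longleftrightarrow> cube_le xs ys \<and> xs \<noteq> ys"

definition hamming :: "bool list \<Rightarrow> bool list \<Rightarrow> nat" where
  "hamming xs ys = card {i. i < length xs \<and> xs ! i \<noteq> ys ! i}"

text \<open>Face map delta_i^a : [n] -> [n+1], inserting a at position i (0-based, i \<le> n).\<close>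
definition face :: "nat \<Rightarrow> nat \<Rightarrow> bool \<Rightarrow> bool list \<Rightarrow> bool list" where
  "face n i a = restrict (\<lambda>xs. take i xs @ a # drop i xs) (cube n)"

definition strictly_increasing :: "nat \<Rightarrow> (bool list \<Rightarrow> bool list) \<Rightarrow> bool" where
  "strictly_increasing m f \<longleftrightarrow>
     (\<forall>x\<in>cube m. \<forall>y\<in>cube m. cube_less x y \<longrightarrow> cube_less (f x) (f y))"

definition adjacency_preserving :: "nat \<Rightarrow> (bool list \<Rightarrow> bool list) \<Rightarrow> bool" where
  "adjacency_preserving m f \<longleftrightarrow> strictly_increasing m f \<and>
     (\<forall>x\<in>cube m. \<forall>y\<in>cube m. hamming x y = 1 \<longrightarrow> hamming (f x) (f y) = 1)"

text \<open>A category of cubes: A m n is the set of morphisms [m] -> [n], represented as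
  extensional functions on cube m.\<close>
definition category_of_cubes :: "(nat \<Rightarrow> nat \<Rightarrow> (bool list \<Rightarrow> bool list) set) \<Rightarrow> bool" where
  "category_of_cubes A \<longleftrightarrow>
     (\<forall>m n. A m n \<subseteq> cube m \<rightarrow>\<^sub>E cube n) \<and>
     (\<forall>n. restrict id (cube n) \<in> A n n) \<and>
     (\<forall>l m n f g. f \<in> A l m \<longrightarrow> g \<in> A m n \<longrightarrow> compose (cube l) g f \<in> A l n) \<and>
     (\<forall>n i a. i \<le> n \<longrightarrow> face n i a \<in> A n (Suc n)) \<and>
     (\<forall>m n f. f \<in> A m n \<longrightarrow> adjacency_preserving m f)"

text \<open>Sections of cosk_1(A[q]_{\<le>1}) in degree n: natural transformations
  A[n]_{\<le>1} -> A[q]_{\<le>1}, i.e. families (phi_0, phi_1), phi_k : A(k,n) -> A(k,q),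
  natural with respect to all morphisms of A between [0] and [1].\<close>
definition cosk1_rep :: "(nat \<Rightarrow> nat \<Rightarrow> (bool list \<Rightarrow> bool list) set) \<Rightarrow> nat \<Rightarrow> nat
    \<Rightarrow> (nat \<Rightarrow> (bool list \<Rightarrow> bool list) \<Rightarrow> (bool list \<Rightarrow> bool list)) set" where
  "cosk1_rep A q n =
     {\<phi> \<in> (\<Pi>\<^sub>E k\<in>{0,1}. A k n \<rightarrow>\<^sub>E A k q).
        \<forall>j\<in>{0,1}. \<forall>k\<in>{0,1}. \<forall>h\<in>A j k. \<forall>g\<in>A k n.
          \<phi> j (compose (cube j) g h) = compose (cube j) (\<phi> k g) h}"

text \<open>The unit A[q] -> cosk_1(A[q]_{\<le>1}) in degree n: restriction of f : [n] -> [q]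
  (a map of presheaves A[n] -> A[q] by Yoneda) to the 1-truncation.\<close>
definition cosk1_unit :: "(nat \<Rightarrow> nat \<Rightarrow> (bool list \<Rightarrow> bool list) set) \<Rightarrow> nat \<Rightarrow> nat
    \<Rightarrow> (bool list \<Rightarrow> bool list) \<Rightarrow> (nat \<Rightarrow> (bool list \<Rightarrow> bool list) \<Rightarrow> (bool list \<Rightarrow> bool list))" where
  "cosk1_unit A q n f = (\<lambda>k\<in>{0,1}. \<lambda>g\<in>A k n. compose (cube k) f g)"

end

theory Submission
  imports Defs
begin

locale coc =
  fixes A assumes coc: "category_of_cubes A"
begin

lemma C: "(\<forall>m n. A m n \<subseteq> cube m \<rightarrow>\<^sub>E cube n) \<and>
     (\<forall>n. restrict id (cube n) \<in> A n n) \<and>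
     (\<forall>l m n f g. f \<in> A l m \<longrightarrow> g \<in> A m n \<longrightarrow> compose (cube l) g f \<in> A l n) \<and>
     (\<forall>n i a. i \<le> n \<longrightarrow> face n i a \<in> A n (Suc n)) \<and>
     (\<forall>m n f. f \<in> A m n \<longrightarrow> adjacency_preserving m f)"
  using coc unfolding category_of_cubes_def .

lemma A_fun: "A m n \<subseteq> cube m \<rightarrow>\<^sub>E cube n"
  using C by simp
lemma A_id: "restrict id (cube n) \<in> A n n"
  using C by simp
lemma A_comp: "f \<in> A l m \<Longrightarrow> g \<in> A m n \<Longrightarrow> compose (cube l) g f \<in> A l n"
  using C by simp
lemma A_face: "i \<le> n \<Longrightarrow> face n i a \<in> A n (Suc n)"
  using C by simp
lemma A_adj: "f \<in> A m n \<Longrightarrow> adjacency_preserving m f"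
  using C by simp

lemma app: "(\<lambda>x\<in>cube k. x @ post) \<in> A k (k + length post)"
proof (induction post rule: rev_induct)
  case Nil
  have "(\<lambda>x\<in>cube k. x @ []) = restrict id (cube k)" by auto
  then show ?case using A_id[of k] by (simp only: list.size add_0_right)
next
  case (snoc a post)
  define m where "m = k + length post"
  have "compose (cube k) (face m m a) (\<lambda>x\<in>cube k. x @ post) = (\<lambda>x\<in>cube k. x @ post @ [a])"
    by (rule ext) (auto simp: compose_def face_def cube_def m_def)
  moreover have "compose (cube k) (face m m a) (\<lambda>x\<in>cube k. x @ post) \<in> A k (Suc m)"
    by (rule A_comp[OF snoc[folded m_def] A_face[of m m a]]) simp
  ultimately have "(\<lambda>x\<in>cube k. x @ post @ [a]) \<in> A k (Suc m)" by metis
  then show ?case by (simp only: append_assoc length_append_singleton add_Suc_right m_def)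
qed

lemma pre: "(\<lambda>x\<in>cube k. pre @ x @ post) \<in> A k (length pre + k + length post)"
proof (induction pre)
  case Nil
  then show ?case using app[where k=k and post=post] by (simp only: append_Nil add_0 list.size(3))
next
  case (Cons a pre)
  define m where "m = length pre + k + length post"
  have "compose (cube k) (face m 0 a) (\<lambda>x\<in>cube k. pre @ x @ post) = (\<lambda>x\<in>cube k. (a # pre) @ x @ post)"
    by (rule ext) (auto simp: compose_def face_def cube_def m_def)
  moreover have "compose (cube k) (face m 0 a) (\<lambda>x\<in>cube k. pre @ x @ post) \<in> A k (Suc m)"
    by (rule A_comp[OF Cons[folded m_def] A_face[of 0 m a]]) simp
  ultimately have "(\<lambda>x\<in>cube k. (a # pre) @ x @ post) \<in> A k (Suc m)" by metis
  moreover have "Suc m = length (a # pre) + k + length post" by (simp add: m_def)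
  ultimately show ?case by metis
qed

lemma pt: "x \<in> cube n \<Longrightarrow> (\<lambda>y\<in>cube 0. x) \<in> A 0 n"
proof -
  assume x: "x \<in> cube n"
  have "(\<lambda>y\<in>cube 0. x @ y @ []) = (\<lambda>y\<in>cube 0. x)"
    by (rule ext) (auto simp: cube_def)
  with pre[where k=0 and pre=x and post="[]"] x show ?thesis by (simp add: cube_def)
qed

lemma cube0: "cube 0 = {[]}" by (auto simp: cube_def)

lemma unit_sub:
  assumes f: "f \<in> A n q"
  shows "cosk1_unit A q n f \<in> cosk1_rep A q n"
  unfolding cosk1_rep_def
proof (intro CollectI conjI ballI)
  show "cosk1_unit A q n f \<in> (\<Pi>\<^sub>E k\<in>{0,1}. A k n \<rightarrow>\<^sub>E A k q)"
    unfolding cosk1_unit_def using A_comp[OF _ f] by auto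
next
  fix j k h g assume jk: "j \<in> {0,1::nat}" "k \<in> {0,1::nat}" and h: "h \<in> A j k" and g: "g \<in> A k n"
  have hP: "h \<in> cube j \<rightarrow> cube k" using h A_fun by blast
  have gh: "compose (cube j) g h \<in> A j n" using A_comp[OF h g] .
  show "cosk1_unit A q n f j (compose (cube j) g h) =
        compose (cube j) (cosk1_unit A q n f k g) h"
    using jk gh g compose_assoc[OF hP, of f g] by (simp add: cosk1_unit_def)
qed

lemma unit_inj: "inj_on (cosk1_unit A q n) (A n q)"
proof (rule inj_onI)
  fix f f' assume f: "f \<in> A n q" and f': "f' \<in> A n q"
    and eq: "cosk1_unit A q n f = cosk1_unit A q n f'"
  show "f = f'"
  proof (rule extensionalityI)
    show "f \<in> extensional (cube n)" "f' \<in> extensional (cube n)"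
      using f f' A_fun[of n q] by (auto simp: PiE_def subset_iff)
  next
    fix x assume x: "x \<in> cube n"
    have p: "(\<lambda>y\<in>cube 0. x) \<in> A 0 n" using pt[OF x] .
    have "cosk1_unit A q n f 0 (\<lambda>y\<in>cube 0. x) [] = cosk1_unit A q n f' 0 (\<lambda>y\<in>cube 0. x) []"
      using eq by simp
    then show "f x = f' x" using p by (simp add: cosk1_unit_def compose_def cube0)
  qed
qed

lemma surj_small:
  assumes n: "n \<le> 1" and phi: "\<phi> \<in> cosk1_rep A q n"
  shows "\<phi> \<in> cosk1_unit A q n ` A n q"
proof -
  have nin: "n \<in> {0,1}" using n by auto
  define f where "f = \<phi> n (restrict id (cube n))"
  have PE: "\<phi> \<in> (\<Pi>\<^sub>E k\<in>{0,1}. A k n \<rightarrow>\<^sub>E A k q)" and nat: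
    "\<forall>j\<in>{0,1}. \<forall>k\<in>{0,1}. \<forall>h\<in>A j k. \<forall>g\<in>A k n.
          \<phi> j (compose (cube j) g h) = compose (cube j) (\<phi> k g) h"
    using phi unfolding cosk1_rep_def by auto
  have f: "f \<in> A n q" unfolding f_def using PE nin A_id by auto
  have "cosk1_unit A q n f = \<phi>"
  proof (rule ext)
    fix k
    show "cosk1_unit A q n f k = \<phi> k"
    proof (cases "k \<in> {0,1}")
      case False
      then show ?thesis using PE by (auto simp: cosk1_unit_def PiE_def extensional_def)
    next
      case True
      show ?thesis
      proof (rule ext)
        fix g
        show "cosk1_unit A q n f k g = \<phi> k g"
        proof (cases "g \<in> A k n")
          case False
          then show ?thesis using PE True by (auto simp: cosk1_unit_def PiE_def extensional_def)
        next
          case g: True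
          have gP: "g \<in> cube k \<rightarrow>\<^sub>E cube n" using g A_fun by blast
          have "compose (cube k) (restrict id (cube n)) g = g"
            using gP by (auto simp: compose_def PiE_def extensional_def fun_eq_iff)
          moreover have "\<phi> k (compose (cube k) (restrict id (cube n)) g)
              = compose (cube k) (\<phi> n (restrict id (cube n))) g"
            using nat True nin g A_id by blast
          ultimately show ?thesis using True g by (simp add: cosk1_unit_def f_def)
        qed
      qed
    qed
  qed
  with f show ?thesis by blast
qed

lemma A11:
  assumes h: "h \<in> A 1 1"
  shows "h [False] = [False] \<and> h [True] = [True]"
proof -
  have hP: "h \<in> cube 1 \<rightarrow> cube 1" using h A_fun by blast
  have c: "[False] \<in> cube 1" "[True] \<in> cube 1" by (auto simp: cube_def)
  have one: "\<And>xs. xs \<in> cube 1 \<Longrightarrow> \<exists>a. xs = [a]"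
    by (auto simp: cube_def length_Suc_conv)
  obtain a where a: "h [False] = [a]" using one hP c by blast
  obtain b where b: "h [True] = [b]" using one hP c by blast
  have "cube_less [False] [True]" by (simp add: cube_less_def cube_le_def)
  hence "cube_less (h [False]) (h [True])"
    using A_adj[OF h] c unfolding adjacency_preserving_def strictly_increasing_def by blast
  then show ?thesis using a b by (auto simp: cube_less_def cube_le_def)
qed

lemma empty_big:
  assumes n: "n \<ge> 2" and q: "q \<le> 1"
  shows "cosk1_rep A q n = {}"
proof (rule ccontr)
  assume "cosk1_rep A q n \<noteq> {}"
  then obtain \<phi> where phi: "\<phi> \<in> cosk1_rep A q n" by blast
  have PE: "\<phi> \<in> (\<Pi>\<^sub>E k\<in>{0,1}. A k n \<rightarrow>\<^sub>E A k q)" and nat: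
    "\<forall>j\<in>{0,1}. \<forall>k\<in>{0,1}. \<forall>h\<in>A j k. \<forall>g\<in>A k n.
          \<phi> j (compose (cube j) g h) = compose (cube j) (\<phi> k g) h"
    using phi unfolding cosk1_rep_def by auto
  define zs where "zs = replicate (n - 2) False"
  define g1 where "g1 = (\<lambda>x\<in>cube 1. [] @ x @ (False # zs))"
  define g2 where "g2 = (\<lambda>x\<in>cube 1. [True] @ x @ zs)"
  have nn: "Suc (Suc (n-2)) = n" "Suc (n-2) = n - 1" using n by auto
  have g1: "g1 \<in> A 1 n" using pre[where k=1 and pre="[]" and post="False # zs"] n unfolding g1_def zs_def by (simp add: nn)
  have g2: "g2 \<in> A 1 n" using pre[where k=1 and pre="[True]" and post=zs] n unfolding g2_def zs_def by (simp add: nn)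
  have 1: "\<phi> 1 g1 \<in> A 1 q" "\<phi> 1 g2 \<in> A 1 q" using PE g1 g2 by auto
  show False
  proof (cases "q = 0")
    case True
    have c: "[False] \<in> cube 1" "[True] \<in> cube 1" by (auto simp: cube_def)
    have "cube_less [False] [True]" by (simp add: cube_less_def cube_le_def)
    hence "cube_less (\<phi> 1 g1 [False]) (\<phi> 1 g1 [True])"
      using A_adj[OF 1(1)] c unfolding adjacency_preserving_def strictly_increasing_def by blast
    moreover have "\<phi> 1 g1 \<in> cube 1 \<rightarrow> cube 0" using 1 True A_fun by blast
    ultimately have "\<phi> 1 g1 [False] = []" "\<phi> 1 g1 [True] = []" "cube_less (\<phi> 1 g1 [False]) (\<phi> 1 g1 [True])"
      using c by (auto simp: cube0)
    then show False by (simp add: cube_less_def)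
  next
    case False
    hence q1: "q = 1" using q by simp
    have pT: "(\<lambda>y\<in>cube 0. [True]) \<in> A 0 1" and pF: "(\<lambda>y\<in>cube 0. [False]) \<in> A 0 1"
      using pt[of "[True]" 1] pt[of "[False]" 1] by (auto simp: cube_def)
    have e1: "\<phi> 0 (compose (cube 0) g1 (\<lambda>y\<in>cube 0. [True])) = compose (cube 0) (\<phi> 1 g1) (\<lambda>y\<in>cube 0. [True])"
      using nat pT g1 by blast
    have e2: "\<phi> 0 (compose (cube 0) g2 (\<lambda>y\<in>cube 0. [False])) = compose (cube 0) (\<phi> 1 g2) (\<lambda>y\<in>cube 0. [False])"
      using nat pF g2 by blast
    have same: "compose (cube 0) g1 (\<lambda>y\<in>cube 0. [True]) = compose (cube 0) g2 (\<lambda>y\<in>cube 0. [False])"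
      by (rule ext) (simp add: compose_def g1_def g2_def cube_def)
    have "\<phi> 1 g1 [True] = \<phi> 1 g2 [False]"
      using fun_cong[OF e1, of "[]"] fun_cong[OF e2, of "[]"] same by (simp add: compose_def cube0)
    moreover have "\<phi> 1 g1 [True] = [True]" "\<phi> 1 g2 [False] = [False]" using A11 1 q1 by auto
    ultimately show False by simp
  qed
qed

end

theorem proposition7p2:
  assumes "category_of_cubes A"
  shows "(\<forall>q n. cosk1_unit A q n ` A n q \<subseteq> cosk1_rep A q n
              \<and> inj_on (cosk1_unit A q n) (A n q))
         \<and> (\<forall>q n. q \<le> 1 \<longrightarrow> cosk1_unit A q n ` A n q = cosk1_rep A q n)"
proof -
  interpret coc A using assms by unfold_locales
  show ?thesis
  proof (intro conjI allI impI)
    fix q n show "cosk1_unit A q n ` A n q \<subseteq> cosk1_rep A q n" using unit_sub by blast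
  next
    fix q n show "inj_on (cosk1_unit A q n) (A n q)" by (rule unit_inj)
  next
    fix q n :: nat assume q: "q \<le> 1"
    show "cosk1_unit A q n ` A n q = cosk1_rep A q n"
    proof (cases "n \<le> 1")
      case True
      then show ?thesis using unit_sub surj_small by blast
    next
      case False
      then have "cosk1_rep A q n = {}" using empty_big q by simp
      then show ?thesis using unit_sub by blast
    qed
  qed
qed

end
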